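(* Let $\gamma$ be the Euler–Mascheroni constant and $\zeta$ the Riemann zeta function. Then $$\lim_{x\to\infty}\left\{\zeta\Bigl(\ln\bigl[\ln(\ln\zeta(x)+1)+1\bigr]+1\Bigr)-2^x+\Bigl(\frac43\Bigr)^x-\frac12\right\}=\gamma .$$ *)

theory Defs
  imports "HOL-Analysis.Analysis"
begin

text \<open>Riemann zeta function on the real half-line s > 1, via its Dirichlet series
  zeta s = sum over n >= 1 of n^(-s). (No zeta function exists in the distribution.)
  For s <= 1 the value is the junk value of suminf; only s > 1 matters below.\<close>
definition rzeta :: "real \<Rightarrow> real" where
  "rzeta s = (\<Sum>n. 1 / (real (Suc n)) powr s)"

end

theory Submission
  imports Defs "HOL-Real_Asymp.Real_Asymp"
begin

lemma G_bound:
  fixes s m :: real assumes s1: "1 < s" and s2: "s \<le> 2" and m1: "1 \<le> m"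
  shows "0 \<le> m powr -s - (m powr (1-s) - (m+1) powr (1-s))/(s-1) \<and>
         m powr -s - (m powr (1-s) - (m+1) powr (1-s))/(s-1) \<le> 2 / m^2"
proof -
  obtain \<xi> where \<xi>: "m < \<xi>" "\<xi> < m+1"
    "(m+1) powr (1-s) - m powr (1-s) = ((m+1) - m) * ((1-s) * \<xi> powr (1-s-1))"
  proof -
    have "\<exists>z. m < z \<and> z < m+1 \<and> (m+1) powr (1-s) - m powr (1-s) = ((m+1) - m) * ((1-s) * z powr (1-s-1))"
    proof (rule MVT2)
      fix x assume "m \<le> x" "x \<le> m+1"
      then show "((\<lambda>t. t powr (1-s)) has_real_derivative (1-s) * x powr (1-s-1)) (at x)"
        using m1 by (intro has_real_derivative_powr) linarith
    qed simp
    then show ?thesis using that by blast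
  qed
  have q: "(m powr (1-s) - (m+1) powr (1-s))/(s-1) = \<xi> powr (-s)"
    using \<xi>(3) s1 by (simp add: field_simps)
  obtain \<eta> where \<eta>: "m < \<eta>" "\<eta> < \<xi>"
    "\<xi> powr (-s) - m powr (-s) = (\<xi> - m) * ((-s) * \<eta> powr (-s-1))"
  proof -
    have "\<exists>z. m < z \<and> z < \<xi> \<and> \<xi> powr (-s) - m powr (-s) = (\<xi> - m) * ((-s) * z powr (-s-1))"
    proof (rule MVT2)
      fix x assume "m \<le> x" "x \<le> \<xi>"
      then show "((\<lambda>t. t powr (-s)) has_real_derivative (-s) * x powr (-s-1)) (at x)"
        using m1 by (intro has_real_derivative_powr) linarith
    qed (use \<xi>(1) in simp)
    then show ?thesis using that by blast
  qed
  have e: "m powr -s - \<xi> powr (-s) = (\<xi> - m) * s * \<eta> powr (-s-1)"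
    using \<eta>(3) by (simp add: algebra_simps)
  have p1: "\<eta> powr (-s-1) \<le> m powr (-s-1)"
    using powr_mono2'[of "-s-1" m \<eta>] \<eta> m1 s1 by simp
  have p2: "m powr (-s-1) \<le> m powr (-2)"
    using powr_mono[of "-s-1" "-2" m] m1 s1 by simp
  have p3: "m powr (-2) = 1 / m^2"
    using m1 by (simp add: powr_minus_divide powr_numeral)
  have pos: "0 \<le> \<eta> powr (-s-1)" by simp
  have "(\<xi> - m) * s * \<eta> powr (-s-1) \<le> 1 * 2 * \<eta> powr (-s-1)"
    using \<xi> s1 s2 pos by (intro mult_right_mono mult_mono) auto
  also have "\<dots> \<le> 2 / m^2" using p1 p2 p3 by simp
  finally have up: "(\<xi> - m) * s * \<eta> powr (-s-1) \<le> 2 / m^2" .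
  have lo: "0 \<le> (\<xi> - m) * s * \<eta> powr (-s-1)" using \<xi> s1 by simp
  show ?thesis using q e up lo by simp
qed

lemma zeta_summable:
  assumes s: "1 < s"
  shows "summable (\<lambda>n. 1 / real (Suc n) powr s)"
proof -
  have "summable (\<lambda>n. real n powr (-s))" using summable_real_powr_iff s by simp
  then have "summable (\<lambda>n. real (Suc n) powr (-s))"
    using summable_Suc_iff[of "\<lambda>n. real n powr (-s)"] by simp
  then show ?thesis by (simp add: powr_minus_divide)
qed

lemma zeta_sums:
  assumes s: "1 < s"
  shows "(\<lambda>n. (1 + real n) powr -s - ((1 + real n) powr (1-s) - (2 + real n) powr (1-s))/(s-1))
           sums (rzeta s - 1/(s-1))"
proof -
  have z: "(\<lambda>n. 1 / real (Suc n) powr s) sums rzeta s"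
    using zeta_summable[OF s] by (simp add: rzeta_def summable_sums)
  have lim0: "(\<lambda>n. real (Suc n) powr (1-s)) \<longlonglongrightarrow> 0"
    by (rule tendsto_neg_powr) (use s in simp,
        rule filterlim_compose[OF filterlim_real_sequentially filterlim_Suc])
  have t: "(\<lambda>n. real (Suc n) powr (1-s) - real (Suc (Suc n)) powr (1-s)) sums (1 - 0)"
    using telescope_sums'[OF lim0] by simp
  have e: "real (Suc (Suc n)) = 2 + real n" for n by simp
  have t2: "(\<lambda>n. ((1 + real n) powr (1-s) - (2 + real n) powr (1-s))/(s-1)) sums (1/(s-1))"
    using sums_divide[OF t, of "s-1"] by (simp only: e of_nat_Suc) simp
  have z2: "(\<lambda>n. (1 + real n) powr -s) sums rzeta s"
    using z by (simp add: powr_minus_divide)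
  show ?thesis using sums_diff[OF z2 t2] by simp
qed

lemma dpow:
  fixes a :: real assumes a: "0 < a"
  shows "((\<lambda>z. a powr (1 - z)) has_real_derivative - ln a) (at 1 within S)"
proof -
  have "((\<lambda>z. a powr (1 - z)) has_real_derivative a powr (1-1) * (-1 * ln a + 0 * (1-1) / a)) (at 1)"
    by (rule DERIV_powr) (use a in \<open>auto intro!: derivative_eq_intros\<close>)
  then show ?thesis using a by (simp add: has_field_derivative_at_within)
qed

lemma zeta_near1: "((\<lambda>s. rzeta s - 1/(s-1)) \<longlongrightarrow> euler_mascheroni) (at_right 1)"
proof -
  define G where "G n s = (1 + real n) powr -s - ((1+real n) powr (1-s) - (2 + real n) powr (1-s))/(s-1)" for n s
  define D where "D n = inverse (real (n+1)) + ln (real (n+1)) - ln (real (n+2))" for n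
  define S where "S = {1<..2::real}"
  have lim: "(G n \<longlongrightarrow> D n) (at 1 within S)" for n
  proof -
    have pos1: "0 < 1 + real n" and pos2: "0 < 2 + real n" by simp_all
    have d: "((\<lambda>s. (1+real n) powr (1-s) - (2 + real n) powr (1-s)) has_field_derivative
              (- ln (1+real n) - - ln (2+real n))) (at 1 within S)"
      using pos1 pos2 by (intro DERIV_diff dpow)
    have "((\<lambda>s. ((1+real n) powr (1-s) - (2 + real n) powr (1-s) -
              ((1+real n) powr (1-1) - (2 + real n) powr (1-1)))/(s-1)) \<longlongrightarrow>
                - ln (1+real n) - - ln (2+real n)) (at 1 within S)"
      using d unfolding has_field_derivative_iff .
    then have "((\<lambda>s. ((1+real n) powr (1-s) - (2 + real n) powr (1-s) - 0)/(s-1)) \<longlongrightarrow>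
                ln (2+real n) - ln (1+real n)) (at 1 within S)"
      using pos1 pos2 by simp
    moreover have "((\<lambda>s. (1+real n) powr -s) \<longlongrightarrow> (1+real n) powr -1) (at 1 within S)"
      using pos1 by (intro tendsto_intros) auto
    ultimately have "(G n \<longlongrightarrow> (1+real n) powr -1 - (ln (2+real n) - ln (1+real n))) (at 1 within S)"
      unfolding G_def by (intro tendsto_diff) simp_all
    moreover have "(1+real n) powr -1 - (ln (2+real n) - ln (1+real n)) = D n"
      unfolding D_def using pos1 by (simp add: powr_minus add.commute)
    ultimately show ?thesis by simp
  qed
  have bnd: "norm (G n s) \<le> 2 / (1 + real n)^2" if "s \<in> S" for n s
  proof -
    have e: "1 + real n + 1 = 2 + real n" by simp
    from G_bound[of s "1 + real n"] that show ?thesis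
      unfolding G_def S_def e by auto
  qed
  have summ: "summable (\<lambda>n. 2 / (1 + real n)^2)"
  proof -
    have "summable (\<lambda>n. inverse (real n ^ 2))" by (rule inverse_power_summable) simp
    then have "summable (\<lambda>n. inverse (real (Suc n) ^ 2))"
      using summable_Suc_iff[of "\<lambda>n. inverse (real n ^ 2)"] by simp
    then have "summable (\<lambda>n. 2 * inverse (real (Suc n) ^ 2))" by (rule summable_mult)
    then show ?thesis by (simp add: field_simps)
  qed
  have unif: "uniform_limit S (\<lambda>n s. \<Sum>i<n. G i s) (\<lambda>s. \<Sum>i. G i s) sequentially"
    by (rule Weierstrass_m_test_ev[OF _ summ]) (use bnd in auto)
  have Dlim: "(\<lambda>n. \<Sum>i<n. D i) \<longlonglongrightarrow> euler_mascheroni"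
    using euler_mascheroni_sum_real unfolding sums_def D_def by simp
  have T1: "((\<lambda>s. \<Sum>i. G i s) \<longlongrightarrow> euler_mascheroni) (at 1 within S)"
  proof (rule swap_uniform_limit[OF _ Dlim unif])
    show "\<forall>\<^sub>F n in sequentially. ((\<lambda>s. \<Sum>i<n. G i s) \<longlongrightarrow> sum D {..<n}) (at 1 within S)"
      by (intro always_eventually allI tendsto_sum lim)
  qed simp
  have ev: "\<forall>\<^sub>F s in at 1 within S. (\<Sum>i. G i s) = rzeta s - 1/(s-1)"
    unfolding eventually_at_filter
    by (rule always_eventually) (auto simp: S_def G_def intro!: sums_unique[symmetric] zeta_sums)
  have "((\<lambda>s. \<Sum>i. G i s) \<longlongrightarrow> euler_mascheroni) (at 1 within S) \<longleftrightarrow>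
        ((\<lambda>s. rzeta s - 1/(s-1)) \<longlongrightarrow> euler_mascheroni) (at 1 within S)"
    using ev by (rule tendsto_cong)
  with T1 have "((\<lambda>s. rzeta s - 1/(s-1)) \<longlongrightarrow> euler_mascheroni) (at 1 within S)" by blast
  moreover have "at (1::real) within S = at 1 within {1<..}"
    by (rule at_within_nhd[of _ "{0<..<2}"]) (auto simp: S_def)
  ultimately show ?thesis by simp
qed

lemma tail_bound:
  fixes x k :: real assumes x: "2 \<le> x" and k: "0 \<le> k"
  shows "1 / (k+5) powr x \<le> 25 * 5 powr -x * (1/(k+4) - 1/(k+5))"
proof -
  define q where "q = (k+5)/5"
  have q1: "1 \<le> q" using k by (simp add: q_def)
  have q5: "5*q = k+5" by (simp add: q_def)
  have a1: "1 / (k+5) powr x = (5*q) powr -x" unfolding q5 by (simp add: powr_minus_divide)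
  have a2: "(5*q) powr -x = 5 powr -x * q powr -x" using powr_mult[of 5 q "-x"] q1 by simp
  have a3: "q powr -x \<le> q powr -2"
    using powr_mono[of "-x" "-2" q] q1 x by auto
  have a4: "q powr -2 = 25 / (k+5)^2"
    using k by (simp add: q_def powr_minus_divide powr_numeral power_divide)
  have a5: "25 / (k+5)^2 \<le> 25 * (1/(k+4) - 1/(k+5))"
  proof -
    have e1: "1/(k+4) - 1/(k+5) = 1/((k+4)*(k+5))" using k by (simp add: field_simps)
    have "25 / (k+5)^2 \<le> 25 / ((k+4)*(k+5))"
      by (rule frac_le) (use k in \<open>auto simp: power2_eq_square intro!: mult_right_mono\<close>)
    then show ?thesis unfolding e1 by simp
  qed
  have a6: "q powr -x \<le> 25 * (1/(k+4) - 1/(k+5))" using a3 a4 a5 by linarith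
  have a7: "5 powr -x * q powr -x \<le> 5 powr -x * (25 * (1/(k+4) - 1/(k+5)))"
    by (rule mult_left_mono[OF a6]) simp
  have eqr: "25 * 5 powr -x * C = 5 powr -x * (25 * C)" for C :: real by (simp add: mult_ac)
  show ?thesis unfolding eqr a1 a2 using a7 .
qed

lemma zeta_bounds:
  assumes x: "2 \<le> x"
  shows "1 + 2 powr -x + 3 powr -x + 2 powr -x * 2 powr -x \<le> rzeta x \<and>
         rzeta x \<le> 1 + 2 powr -x + 3 powr -x + 2 powr -x * 2 powr -x + 7 * 5 powr -x"
proof -
  define t where "t n = 1 / real (Suc n) powr x" for n
  have sm: "summable t" unfolding t_def by (rule zeta_summable) (use x in simp)
  have split: "rzeta x = (\<Sum>n. t (n+4)) + (\<Sum>n<4. t n)"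
    using suminf_split_initial_segment[OF sm, of 4] unfolding rzeta_def t_def by simp
  have four: "(4::real) powr -x = 2 powr -x * 2 powr -x"
    using powr_mult[of 2 2 "-x"] by simp
  have fin: "(\<Sum>n<4. t n) = 1 + 2 powr -x + 3 powr -x + 2 powr -x * 2 powr -x"
    using powr_mult[of 2 2 x] by (simp add: t_def lessThan_nat_numeral powr_minus_divide eval_nat_numeral)
  have sm4: "summable (\<lambda>n. t (n+4))" using sm by (rule summable_ignore_initial_segment)
  have tnn: "0 \<le> t n" for n by (simp add: t_def)
  have lo: "0 \<le> (\<Sum>n. t (n+4))" by (rule suminf_nonneg[OF sm4]) (simp add: tnn)
  have lim0: "(\<lambda>n. 1 / (real n + 4)) \<longlonglongrightarrow> 0"
    by real_asymp
  have tel: "(\<lambda>n. 1 / (real n + 4) - 1 / (real (Suc n) + 4)) sums (1/4 - 0)"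
    using telescope_sums'[OF lim0] by simp
  have tel2: "(\<lambda>n. 25 * 5 powr -x * (1 / (real n + 4) - 1 / (real n + 5))) sums (25 * 5 powr -x * (1/4))"
    using sums_mult[OF tel, of "25 * 5 powr -x"] by (simp add: add.commute add.left_commute)
  have tb: "t (n+4) \<le> 25 * 5 powr -x * (1 / (real n + 4) - 1 / (real n + 5))" for n
  proof -
    have "t (n+4) = 1 / (real n + 5) powr x" by (simp add: t_def add.commute)
    also have "\<dots> \<le> 25 * 5 powr -x * (1 / (real n + 4) - 1 / (real n + 5))"
      by (rule tail_bound) (use x in auto)
    finally show ?thesis .
  qed
  have up: "(\<Sum>n. t (n+4)) \<le> 25 * 5 powr -x * (1/4)"
    using suminf_le[OF tb sm4 sums_summable[OF tel2]] sums_unique[OF tel2] by simp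
  have "25 * 5 powr -x * (1/4) \<le> 7 * (5::real) powr -x" by simp
  then show ?thesis using split fin lo up by linarith
qed

lemma cc_pos: fixes z :: real assumes "1 < z" shows "0 < ln (ln (ln z + 1) + 1)"
proof -
  have "0 < ln z" using assms by simp
  then have "0 < ln (ln z + 1)" by simp
  then show ?thesis by simp
qed

lemma cc_mono: fixes z w :: real assumes "1 < z" "z \<le> w"
  shows "ln (ln (ln z + 1) + 1) \<le> ln (ln (ln w + 1) + 1)"
proof -
  have a: "0 < ln z" using assms by simp
  have b: "ln z \<le> ln w" using assms by simp
  have c: "0 < ln (ln z + 1)" using a by simp
  have d: "ln (ln z + 1) \<le> ln (ln w + 1)" using a b by simp
  show ?thesis using c d by simp
qed

theorem mainTheorem11:
  shows "((\<lambda>x::real. rzeta (ln (ln (ln (rzeta x) + 1) + 1) + 1) - 2 powr x + (4/3) powr x - 1/2)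
          \<longlongrightarrow> (euler_mascheroni :: real)) at_top"
proof -
  define cc :: "real \<Rightarrow> real" where "cc z = ln (ln (ln z + 1) + 1)" for z
  define L :: "real \<Rightarrow> real" where "L x = 1 + 2 powr -x + 3 powr -x + 2 powr -x * 2 powr -x" for x
  define U :: "real \<Rightarrow> real" where "U x = L x + 7 * 5 powr -x" for x
  have h0: "0 < ln (2::real)" by simp
  have h1: "ln 3 < 2 * ln (2::real)"
  proof -
    have "ln (3::real) < ln 4" by simp
    also have "ln (4::real) = 2 * ln 2" using ln_mult[of 2 2] by simp
    finally show ?thesis .
  qed
  have h2: "3 * ln 2 < 2 * ln (3::real)"
  proof -
    have "3 * ln (2::real) = ln 8" using ln_realpow[of 2 3] by simp
    also have "\<dots> < ln 9" by simp
    also have "ln (9::real) = 2 * ln 3" using ln_realpow[of 3 2] by simp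
    finally show ?thesis .
  qed
  have h3: "2 * ln 2 < ln (5::real)"
  proof -
    have "2 * ln (2::real) = ln 4" using ln_mult[of 2 2] by simp
    also have "\<dots> < ln 5" by simp
    finally show ?thesis .
  qed
  have h4: "2 * ln 5 < 5 * ln (2::real)"
  proof -
    have "2 * ln (5::real) = ln 25" using ln_realpow[of 5 2] by simp
    also have "\<dots> < ln 32" by simp
    also have "ln (32::real) = 5 * ln 2" using ln_realpow[of 2 5] by simp
    finally show ?thesis .
  qed
  have h5: "ln 3 < ln (5::real)" by simp
  have limL: "((\<lambda>x::real. 1/ln(ln(ln(1 + 2 powr (-x) + 3 powr (-x) + 2 powr (-x) * 2 powr (-x))+1)+1)
        - 2 powr x + 2 powr x * 2 powr x * 3 powr (-x) - 1/2) \<longlongrightarrow> 0) at_top"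
    by (real_asymp simp add: h0 h1 h2 h3 h4 h5 field_simps)
  have limU: "((\<lambda>x::real. 1/ln(ln(ln(1 + 2 powr (-x) + 3 powr (-x) + 2 powr (-x) * 2 powr (-x) + 7 * 5 powr (-x))+1)+1)
        - 2 powr x + 2 powr x * 2 powr x * 3 powr (-x) - 1/2) \<longlongrightarrow> 0) at_top"
    by (real_asymp simp add: h0 h1 h2 h3 h4 h5 field_simps)
  have limcU: "((\<lambda>x::real. ln(ln(ln(1 + 2 powr (-x) + 3 powr (-x) + 2 powr (-x) * 2 powr (-x) + 7 * 5 powr (-x))+1)+1))
         \<longlongrightarrow> 0) at_top"
    by (real_asymp simp add: h0 h1 h2 h3 h4 h5 field_simps)
  have fq: "(4/3::real) powr x = 2 powr x * 2 powr x * 3 powr -x" for x :: real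
    by (simp add: powr_divide powr_minus_divide flip: powr_mult)
  have Lgt: "1 < L x" for x unfolding L_def by (simp add: add_pos_nonneg add_nonneg_nonneg)
  have ev2: "\<forall>\<^sub>F x in at_top. (2::real) \<le> x" by (rule eventually_ge_at_top)
  have evb: "\<forall>\<^sub>F x in at_top. L x \<le> rzeta x \<and> rzeta x \<le> U x"
    using ev2 by eventually_elim (use zeta_bounds in \<open>auto simp: L_def U_def\<close>)
  have evc: "\<forall>\<^sub>F x in at_top. 0 < cc (L x) \<and> cc (L x) \<le> cc (rzeta x) \<and> cc (rzeta x) \<le> cc (U x)"
    using evb by eventually_elim
      (use Lgt cc_pos cc_mono in \<open>auto simp: cc_def intro: cc_mono order.strict_trans2\<close>)
  define E where "E x = 1 / cc (rzeta x) - 2 powr x + (4/3) powr x - 1/2" for x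
  have E0: "(E \<longlongrightarrow> 0) at_top"
  proof (rule tendsto_sandwich[where f="\<lambda>x. 1/cc (U x) - 2 powr x + 2 powr x * 2 powr x * 3 powr (-x) - 1/2" and g=E
                                   and h="\<lambda>x. 1/cc (L x) - 2 powr x + 2 powr x * 2 powr x * 3 powr (-x) - 1/2"])
    show "\<forall>\<^sub>F x in at_top. 1/cc (U x) - 2 powr x + 2 powr x * 2 powr x * 3 powr (-x) - 1/2 \<le> E x"
      using evc by eventually_elim (auto simp: E_def fq intro!: divide_left_mono mult_pos_pos)
    show "\<forall>\<^sub>F x in at_top. E x \<le> 1/cc (L x) - 2 powr x + 2 powr x * 2 powr x * 3 powr (-x) - 1/2"
      using evc by eventually_elim (auto simp: E_def fq intro!: divide_left_mono mult_pos_pos)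
    show "((\<lambda>x. 1/cc (U x) - 2 powr x + 2 powr x * 2 powr x * 3 powr (-x) - 1/2) \<longlongrightarrow> 0) at_top"
      using limU by (simp add: cc_def U_def L_def add.assoc)
    show "((\<lambda>x. 1/cc (L x) - 2 powr x + 2 powr x * 2 powr x * 3 powr (-x) - 1/2) \<longlongrightarrow> 0) at_top"
      using limL by (simp add: cc_def L_def add.assoc)
  qed
  have c0: "((\<lambda>x. cc (rzeta x)) \<longlongrightarrow> 0) at_top"
  proof (rule tendsto_sandwich[where f="\<lambda>x. 0" and h="\<lambda>x. cc (U x)"])
    show "\<forall>\<^sub>F x in at_top. 0 \<le> cc (rzeta x)" using evc by eventually_elim auto
    show "\<forall>\<^sub>F x in at_top. cc (rzeta x) \<le> cc (U x)" using evc by eventually_elim auto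
    show "((\<lambda>x. 0) \<longlongrightarrow> (0::real)) at_top" by simp
    show "((\<lambda>x. cc (U x)) \<longlongrightarrow> 0) at_top" using limcU by (simp add: cc_def U_def L_def add.assoc)
  qed
  have gfilt: "filterlim (\<lambda>x. cc (rzeta x) + 1) (at_right 1) at_top"
  proof (rule tendsto_imp_filterlim_at_right)
    show "((\<lambda>x. cc (rzeta x) + 1) \<longlongrightarrow> 1) at_top" using tendsto_add[OF c0 tendsto_const[of 1]] by simp
    show "\<forall>\<^sub>F x in at_top. 1 < cc (rzeta x) + 1" using evc by eventually_elim auto
  qed
  have Z: "((\<lambda>x. rzeta (cc (rzeta x) + 1) - 1 / (cc (rzeta x) + 1 - 1)) \<longlongrightarrow> euler_mascheroni) at_top"
    using filterlim_compose[OF zeta_near1 gfilt] by simp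
  have eq: "(rzeta (cc (rzeta x) + 1) - 1 / (cc (rzeta x) + 1 - 1)) + E x =
     rzeta (ln (ln (ln (rzeta x) + 1) + 1) + 1) - 2 powr x + (4/3) powr x - 1/2" for x
    by (simp add: E_def cc_def)
  show ?thesis using tendsto_add[OF Z E0] unfolding eq add_0_right .
qed

end
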